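(* Let $A,B\in\mathrm{SL}_2\mathbb{Z}_{\ge0}$ be noncommuting, well oriented, with $\mathrm{tr}(A)<\mathrm{tr}(B)$ and $\mathrm{tr}(AB)=\mathrm{tr}(B^2)$. Fix a (possibly empty) word $w$ and an integer $s\ge0$. Then: (1) $[wab(ab^2)^sab^3]<[wab^2(ab^2)^sab^2]$; (2) $[wab^3(ab^2)^sab]<[wab^2(ab^2)^sab^2]$, provided $w$ is empty or begins with $a$.
   Context: Words are finite strings over $\{a,b\}$; $\phi$ is the monoid homomorphism with $\phi(a)=A,\phi(b)=B$, and $[w]=\mathrm{tr}(\phi(w))$. Fixed points are for the Möbius action on $\partial\mathcal{H}=\mathbb{P}^1\mathbb{R}$; $\alpha^\pm$ ($\beta^\pm$) are the attracting/repelling fixed points of $A$ ($B$), both equal to the unique fixed point if parabolic. With $\partial\mathcal{H}$ cyclically ordered and $[\alpha,\beta]$ the closed counterclockwise interval from $\alpha$ to $\beta$, let $I^+=\{\alpha^+\}$ if $\alpha^+=\beta^+$, and otherwise the one of $[\alpha^+,\beta^+],[\beta^+,\alpha^+]$ mapped into itself by both $A$ and $B$ (if it exists); define $I^-$ likewise with $A^{-1},B^{-1},\alpha^-,\beta^-$. The pair is coherently oriented if both exist, and well oriented if $A,B$ is coherently oriented but $A,B^{-1}$ is not. *)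

theory Defs
  imports "HOL-Analysis.Analysis"
begin

datatype letter = La | Lb

definition phi :: "int^2^2 \<Rightarrow> int^2^2 \<Rightarrow> letter list \<Rightarrow> int^2^2" where
  "phi A B w = foldr (\<lambda>l M. (case l of La \<Rightarrow> A | Lb \<Rightarrow> B) ** M) w (mat 1)"

definition trw :: "int^2^2 \<Rightarrow> int^2^2 \<Rightarrow> letter list \<Rightarrow> int" where
  "trw A B w = trace (phi A B w)"

definition SL2_nonneg :: "int^2^2 \<Rightarrow> bool" where
  "SL2_nonneg M \<longleftrightarrow> det M = 1 \<and> (\<forall>i j. M $ i $ j \<ge> 0)"

section \<open>The projective line P^1(R) = R \<union> {\<infinity>} (None = \<infinity>) and the Moebius action\<close>

definition realM :: "int^2^2 \<Rightarrow> real^2^2" where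
  "realM M = (\<chi> i j. real_of_int (M $ i $ j))"

definition proj :: "real^2 \<Rightarrow> real option" where
  "proj v = (if v $ 2 = 0 then None else Some (v $ 1 / v $ 2))"

fun hvec :: "real option \<Rightarrow> real^2" where
  "hvec None = vector [1, 0]"
| "hvec (Some x) = vector [x, 1]"

definition mob :: "real^2^2 \<Rightarrow> real option \<Rightarrow> real option" where
  "mob M z = proj (M *v hvec z)"

text \<open>For a parabolic matrix
  both are the unique fixed point.\<close>
definition attr_fix :: "real^2^2 \<Rightarrow> real option" where
  "attr_fix M = (SOME z. \<exists>v c. v \<noteq> 0 \<and> M *v v = c *s v \<and> z = proj v \<and>
      (\<forall>w \<mu>. w \<noteq> 0 \<and> M *v w = \<mu> *s w \<longrightarrow> \<bar>\<mu>\<bar> \<le> \<bar>c\<bar>))"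

definition rep_fix :: "real^2^2 \<Rightarrow> real option" where
  "rep_fix M = (SOME z. \<exists>v c. v \<noteq> 0 \<and> M *v v = c *s v \<and> z = proj v \<and>
      (\<forall>w \<mu>. w \<noteq> 0 \<and> M *v w = \<mu> *s w \<longrightarrow> \<bar>c\<bar> \<le> \<bar>\<mu>\<bar>))"

text \<open>Closed counterclockwise interval [x,y] of P^1(R) (cyclic order = increasing
  direction along R, wrapping through \<infinity>).\<close>
fun ccw_int :: "real option \<Rightarrow> real option \<Rightarrow> real option set" where
  "ccw_int (Some x) (Some y) =
     (if x \<le> y then Some ` {x..y} else Some ` {x..} \<union> {None} \<union> Some ` {..y})"
| "ccw_int None (Some y) = {None} \<union> Some ` {..y}"
| "ccw_int (Some x) None = Some ` {x..} \<union> {None}"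
| "ccw_int None None = {None}"

definition interval_exists :: "real^2^2 \<Rightarrow> real^2^2 \<Rightarrow> real option \<Rightarrow> real option \<Rightarrow> bool" where
  "interval_exists M N x y \<longleftrightarrow> x = y \<or>
     (\<exists>I \<in> {ccw_int x y, ccw_int y x}. mob M ` I \<subseteq> I \<and> mob N ` I \<subseteq> I)"

definition coherently_oriented :: "real^2^2 \<Rightarrow> real^2^2 \<Rightarrow> bool" where
  "coherently_oriented M N \<longleftrightarrow>
     interval_exists M N (attr_fix M) (attr_fix N) \<and>
     interval_exists (matrix_inv M) (matrix_inv N) (rep_fix M) (rep_fix N)"

definition well_oriented :: "int^2^2 \<Rightarrow> int^2^2 \<Rightarrow> bool" where
  "well_oriented A B \<longleftrightarrow> coherently_oriented (realM A) (realM B) \<and>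
     \<not> coherently_oriented (realM A) (matrix_inv (realM B))"

end

theory Submission
  imports Defs
begin


datatype m2 = M2 int int int int

instantiation m2 :: ring_1
begin
definition "0 = M2 0 0 0 0"
definition "1 = M2 1 0 0 1"
fun plus_m2 where "plus_m2 (M2 a b c d) (M2 e f g h) = M2 (a+e) (b+f) (c+g) (d+h)"
fun minus_m2 where "minus_m2 (M2 a b c d) (M2 e f g h) = M2 (a-e) (b-f) (c-g) (d-h)"
fun uminus_m2 where "uminus_m2 (M2 a b c d) = M2 (-a) (-b) (-c) (-d)"
fun times_m2 where "times_m2 (M2 a b c d) (M2 e f g h) = M2 (a*e+b*g) (a*f+b*h) (c*e+d*g) (c*f+d*h)"
instance
proof
  fix x y z :: m2
  show "x * y * z = x * (y * z)" by (cases x; cases y; cases z) (simp add: algebra_simps)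
  show "x + y + z = x + (y + z)" by (cases x; cases y; cases z) (simp add: algebra_simps)
  show "x + y = y + x" by (cases x; cases y) (simp add: algebra_simps)
  show "0 + x = x" by (cases x) (simp add: zero_m2_def)
  show "- x + x = 0" by (cases x) (simp add: zero_m2_def)
  show "x - y = x + - y" by (cases x; cases y) simp
  show "(x + y) * z = x * z + y * z" by (cases x; cases y; cases z) (simp add: algebra_simps)
  show "x * (y + z) = x * y + x * z" by (cases x; cases y; cases z) (simp add: algebra_simps)
  show "1 * x = x" by (cases x) (simp add: one_m2_def)
  show "x * 1 = x" by (cases x) (simp add: one_m2_def)
  show "(0::m2) \<noteq> 1" by (simp add: zero_m2_def one_m2_def)
qed
end

fun tr2 where "tr2 (M2 a b c d) = a + d"
fun dt2 where "dt2 (M2 a b c d) = a*d - b*c"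
fun nn where "nn (M2 a b c d) \<longleftrightarrow> a \<ge> 0 \<and> b \<ge> 0 \<and> c \<ge> 0 \<and> d \<ge> 0"
fun sm where "sm k (M2 a b c d) = M2 (k*a) (k*b) (k*c) (k*d)"

lemma tr_add[simp]: "tr2 (x + y) = tr2 x + tr2 y" by (cases x; cases y) simp
lemma tr_diff[simp]: "tr2 (x - y) = tr2 x - tr2 y" by (cases x; cases y) simp
lemma tr_sm[simp]: "tr2 (sm k x) = k * tr2 x" by (cases x) (simp add: algebra_simps)
lemma tr_comm: "tr2 (x * y) = tr2 (y * x)" by (cases x; cases y) (simp add: algebra_simps)
lemma sm_mult_l[simp]: "sm k x * y = sm k (x * y)" by (cases x; cases y) (simp add: algebra_simps)
lemma sm_mult_r[simp]: "x * sm k y = sm k (x * y)" by (cases x; cases y) (simp add: algebra_simps)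
lemma sm_dist: "sm k (x + y) = sm k x + sm k y" "sm k (x - y) = sm k x - sm k y"
  by (cases x; cases y; simp add: algebra_simps)+
lemma dt_mult: "dt2 (x * y) = dt2 x * dt2 y" by (cases x; cases y) (simp add: algebra_simps)
lemma nn_mult: "nn x \<Longrightarrow> nn y \<Longrightarrow> nn (x * y)" by (cases x; cases y) simp
lemma nn_tr: "nn x \<Longrightarrow> tr2 x \<ge> 0" by (cases x) simp
lemma nn_tr_pos: "nn x \<Longrightarrow> dt2 x = 1 \<Longrightarrow> tr2 x \<ge> 2"
proof (cases x)
  case (M2 a b c d)
  assume "nn x" "dt2 x = 1"
  with M2 have h: "a \<ge> 0" "d \<ge> 0" "a*d = 1 + b*c" "b*c \<ge> 0" by auto
  then have "a*d \<ge> 1" by simp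
  then have "a \<ge> 1" "d \<ge> 1" using h
    by (metis int_one_le_iff_zero_less mult_eq_0_iff order_le_less zero_less_mult_pos2 zero_le_mult_iff, 
        metis int_one_le_iff_zero_less mult_eq_0_iff order_le_less zero_less_mult_pos zero_le_mult_iff)
  then show ?thesis using M2 by simp
qed

lemma CH: "dt2 b = 1 \<Longrightarrow> b * b = sm (tr2 b) b - 1"
  by (cases b) (simp add: one_m2_def algebra_simps)
definition adj where "adj x = sm (tr2 x) 1 - x"
lemma adj_l: "dt2 a = 1 \<Longrightarrow> adj a * a = 1"
  by (cases a) (simp add: adj_def one_m2_def algebra_simps)
lemma adj_swap: "a * adj b = sm (tr2 (a * adj b)) 1 - b * adj a"
  by (cases a; cases b) (simp add: adj_def one_m2_def algebra_simps)



lemma sm_sm[simp]: "sm k (sm l x) = sm (k*l) x" by (cases x) (simp add: algebra_simps)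

lemma bb_rules:
  assumes db: "dt2 b = 1"
  shows "b*b = sm (tr2 b) b - 1" "b*(b*z) = sm (tr2 b) (b*z) - z"
proof -
  show h1: "b*b = sm (tr2 b) b - 1" using CH[OF db] .
  show "b*(b*z) = sm (tr2 b) (b*z) - z"
    by (metis h1 mult.assoc left_diff_distrib mult_1 sm_mult_l)
qed

lemma id1:
  assumes db: "dt2 b = 1"
  shows "a*b*b*Q*b*b - a*b*Q*b*b*b = a*Q - a*adj b*Q*b"
  by (simp add: adj_def mult.assoc bb_rules[OF db] algebra_simps sm_dist)

lemma id2:
  assumes db: "dt2 b = 1"
  shows "a*b*b*Q*b*b - a*b*b*b*Q*b = a*Q - a*b*Q*adj b"
  by (simp add: adj_def mult.assoc bb_rules[OF db] algebra_simps sm_dist)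

lemma tr_sm1: "tr2 (x * sm k y) = k * tr2 (x*y)" by simp

lemma adj_tr: "tr2 (a * adj b) = tr2 a * tr2 b - tr2 (a*b)"
  by (cases a; cases b) (simp add: adj_def one_m2_def algebra_simps)
lemma trbb: "dt2 b = 1 \<Longrightarrow> tr2 (b*b) = tr2 b * tr2 b - 2"
  by (cases b) (simp add: algebra_simps)

definition good where "good x \<longleftrightarrow> nn x \<and> dt2 x = 1"
lemma good_mult: "good x \<Longrightarrow> good y \<Longrightarrow> good (x*y)"
  by (simp add: good_def nn_mult dt_mult)
lemma good_one: "good 1" by (simp add: good_def one_m2_def)
lemma good_pow: "good x \<Longrightarrow> good (x^n)"
  by (induction n) (simp_all add: good_one good_mult)
lemma pow_shift: "(x*y)^n * x = x * (y*x)^(n::nat)" for x y :: "'a::monoid_mult"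
proof (induction n)
  case 0 then show ?case by (metis mult_1 mult_1_right power_0)
next
  case (Suc n)
  have "(x*y)^Suc n * x = (x*y)*((x*y)^n*x)" by (simp only: power_Suc mult.assoc)
  also have "\<dots> = (x*y)*(x*(y*x)^n)" by (simp only: Suc)
  also have "\<dots> = x*((y*x)*(y*x)^n)" by (simp only: mult.assoc)
  also have "\<dots> = x*(y*x)^Suc n" by (simp only: power_Suc)
  finally show ?case .
qed

definition toM :: "int^2^2 \<Rightarrow> m2" where
  "toM X = M2 (X$1$1) (X$1$2) (X$2$1) (X$2$2)"
lemma toM_mult: "toM (X ** Y) = toM X * toM Y"
  by (simp add: toM_def matrix_matrix_mult_def sum_2)
lemma toM_one: "toM (mat 1) = 1"
  by (simp add: toM_def mat_def one_m2_def)
lemma toM_tr: "trace X = tr2 (toM X)"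
  by (simp add: toM_def trace_def sum_2)
lemma toM_good: "SL2_nonneg X \<Longrightarrow> good (toM X)"
  by (simp add: SL2_nonneg_def toM_def good_def det_2)

definition pw :: "m2 \<Rightarrow> m2 \<Rightarrow> letter list \<Rightarrow> m2" where
  "pw a b w = foldr (\<lambda>l M. (case l of La \<Rightarrow> a | Lb \<Rightarrow> b) * M) w 1"
lemma pw_toM: "toM (phi A B w) = pw (toM A) (toM B) w"
  by (induction w) (auto simp: phi_def pw_def toM_one toM_mult split: letter.split)
lemma pw_app: "pw a b (u @ v) = pw a b u * pw a b v"
  by (induction u) (simp_all add: pw_def mult.assoc)
lemma pw_simps[simp]: "pw a b [] = 1" "pw a b (La # w) = a * pw a b w" "pw a b (Lb # w) = b * pw a b w"
  by (simp_all add: pw_def)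
lemma pw_good: "good a \<Longrightarrow> good b \<Longrightarrow> good (pw a b w)"
proof (induction w)
  case Nil then show ?case by (simp add: good_one)
next
  case (Cons l w) then show ?case by (cases l) (simp_all add: good_mult)
qed
lemma pw_rep: "pw a b (concat (replicate s [La, Lb, Lb])) = (a*b*b)^s"
  by (induction s) (simp_all add: pw_app mult.assoc)

lemma trw_pw: "trw A B w = tr2 (pw (toM A) (toM B) w)"
  by (simp add: trw_def toM_tr pw_toM)

lemma gtr: "good x \<Longrightarrow> tr2 x \<ge> 2" by (simp add: good_def nn_tr_pos)
lemma gtr0: "good x \<Longrightarrow> tr2 x \<ge> 0" using gtr by force


theorem main_m2:
  fixes a b W P :: m2
  assumes ga: "good a" and gb: "good b" and gW: "good W" and P: "P = (a*b*b)^s"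
    and lt: "tr2 a < tr2 b" and eq: "tr2 (a*b) = tr2 (b*b)"
  shows "tr2 (W * (a*b*P*a*b*b*b)) < tr2 (W*(a*b*b*P*a*b*b))"
    and "(W = 1 \<or> (\<exists>W'. good W' \<and> W = a * W')) \<Longrightarrow>
         tr2 (W * (a*b*b*b*P*a*b)) < tr2 (W*(a*b*b*P*a*b*b))"
proof -
  have da: "dt2 a = 1" and db: "dt2 b = 1" using ga gb by (auto simp: good_def)
  define t where "t = tr2 (a * adj b)"
  have t: "t \<le> 0"
  proof -
    have "tr2 a \<ge> 2" "tr2 b \<ge> 2" using gtr ga gb by auto
    moreover have "t = tr2 a * tr2 b - tr2 b * tr2 b + 2"
      using adj_tr trbb[OF db] eq t_def by simp
    moreover have "tr2 b * (tr2 b - tr2 a) \<ge> tr2 b * 1"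
      by (rule mult_left_mono) (use lt calculation in auto)
    ultimately show ?thesis by (simp add: algebra_simps)
  qed
  define R where "R = (b*b*a)^s"
  have QR: "P * a = a * R" unfolding P R_def by (metis pow_shift mult.assoc)
  have gP: "good P" and gR: "good R" unfolding P R_def
    by (intro good_pow good_mult ga gb)+
  have sw: "a * adj b = sm t 1 - b * adj a" using adj_swap t_def by simp
  have aa: "adj a * a = 1" using adj_l[OF da] .
  show "tr2 (W * (a*b*P*a*b*b*b)) < tr2 (W*(a*b*b*P*a*b*b))"
  proof -
    have "W*(a*b*b*P*a*b*b) - W*(a*b*P*a*b*b*b) = W*(a*b*b*(P*a)*b*b - a*b*(P*a)*b*b*b)"
      by (simp add: algebra_simps)
    also have "\<dots> = W*(a*(a*R) - a*adj b*(a*R)*b)" using id1[OF db, of a "P*a"] QR by simp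
    also have "a*adj b*(a*R)*b = sm t (a*R*b) - b*R*b"
      by (simp add: sw algebra_simps mult.assoc aa flip: mult.assoc[of "adj a" a])
    finally have e: "W*(a*b*b*P*a*b*b) - W*(a*b*P*a*b*b*b) = W*a*a*R - sm t (W*a*R*b) + W*b*R*b"
      by (simp add: algebra_simps sm_dist)
    have "tr2 (W*a*a*R) \<ge> 2" by (intro gtr good_mult gW ga gR)
    moreover have "tr2 (W*a*R*b) \<ge> 0" "tr2 (W*b*R*b) \<ge> 0" by (intro gtr0 good_mult gW ga gR gb)+
    moreover have "t * tr2 (W*a*R*b) \<le> 0" using t calculation(2) by (simp add: mult_nonpos_nonneg)
    ultimately have "tr2 (W*(a*b*b*P*a*b*b) - W*(a*b*P*a*b*b*b)) > 0"
      unfolding e tr_add tr_diff tr_sm by linarith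
    then show ?thesis by simp
  qed
  assume hW: "W = 1 \<or> (\<exists>W'. good W' \<and> W = a * W')"
  show "tr2 (W * (a*b*b*b*P*a*b)) < tr2 (W*(a*b*b*P*a*b*b))"
  proof -
    have "W*(a*b*b*P*a*b*b) - W*(a*b*b*b*P*a*b) = W*(a*b*b*(P*a)*b*b - a*b*b*b*(P*a)*b)"
      by (simp add: algebra_simps)
    also have "\<dots> = W*(a*(P*a) - a*b*(P*a)*adj b)" using id2[OF db, of a "P*a"] by simp
    also have "a*b*(P*a)*adj b = sm t (a*b*P) - a*b*P*b*adj a"
      by (simp add: mult.assoc sw algebra_simps)
    finally have e: "W*(a*b*b*P*a*b*b) - W*(a*b*b*b*P*a*b) = W*a*P*a - sm t (W*a*b*P) + W*a*b*P*b*adj a"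
      by (simp add: algebra_simps sm_dist)
    have last: "tr2 (W*a*b*P*b*adj a) \<ge> 0"
      using hW
    proof
      assume "W = 1"
      have "tr2 (W*a*b*P*b*adj a) = tr2 ((a*b*P*b)*adj a)" using \<open>W = 1\<close> by simp
      also have "\<dots> = tr2 (adj a * (a*b*P*b))" by (rule tr_comm)
      also have "\<dots> = tr2 ((adj a*a)*b*P*b)" by (simp add: mult.assoc)
      also have "\<dots> = tr2 (b*P*b)" using aa by simp
      finally show ?thesis using gtr0[OF good_mult[OF good_mult[OF gb gP] gb]] by (simp only: mult.assoc)
    next
      assume "\<exists>W'. good W' \<and> W = a * W'"
      then obtain W' where gW': "good W'" and W: "W = a * W'" by blast
      have "tr2 (W*a*b*P*b*adj a) = tr2 ((a*(W'*a*b*P*b))*adj a)" using W by (simp add: mult.assoc)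
      also have "\<dots> = tr2 (adj a * (a*(W'*a*b*P*b)))" by (rule tr_comm)
      also have "\<dots> = tr2 ((adj a*a)*(W'*a*b*P*b))" by (simp add: mult.assoc)
      also have "\<dots> = tr2 (W'*a*b*P*b)" using aa by simp
      finally show ?thesis using gtr0[OF good_mult[OF good_mult[OF good_mult[OF good_mult[OF gW' ga] gb] gP] gb]] by (simp only: mult.assoc)
    qed
    have "tr2 (W*a*P*a) \<ge> 2" by (intro gtr good_mult gW ga gP)
    moreover have "tr2 (W*a*b*P) \<ge> 0" by (intro gtr0 good_mult gW ga gP gb)+
    moreover have "t * tr2 (W*a*b*P) \<le> 0" using t calculation(2) by (simp add: mult_nonpos_nonneg)
    ultimately have "tr2 (W*(a*b*b*P*a*b*b) - W*(a*b*b*b*P*a*b)) > 0"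
      using last unfolding e tr_add tr_diff tr_sm by linarith
    then show ?thesis by simp
  qed
qed


theorem lemma6p1:
  fixes A B :: "int^2^2" and w :: "letter list" and s :: nat
  assumes "SL2_nonneg A" and "SL2_nonneg B"
    and "A ** B \<noteq> B ** A"
    and "well_oriented A B"
    and "trace A < trace B"
    and "trace (A ** B) = trace (B ** B)"
  shows "trw A B (w @ [La, Lb] @ concat (replicate s [La, Lb, Lb]) @ [La, Lb, Lb, Lb])
           < trw A B (w @ [La, Lb, Lb] @ concat (replicate s [La, Lb, Lb]) @ [La, Lb, Lb])
         \<and> ((w = [] \<or> hd w = La) \<longrightarrow>
           trw A B (w @ [La, Lb, Lb, Lb] @ concat (replicate s [La, Lb, Lb]) @ [La, Lb])
           < trw A B (w @ [La, Lb, Lb] @ concat (replicate s [La, Lb, Lb]) @ [La, Lb, Lb]))"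
proof -
  define a where "a = toM A"
  define b where "b = toM B"
  define W where "W = pw a b w"
  define P where "P = (a*b*b)^s"
  have ga: "good a" and gb: "good b" using assms(1,2) toM_good a_def b_def by auto
  have gW: "good W" unfolding W_def by (rule pw_good[OF ga gb])
  have lt: "tr2 a < tr2 b" using assms(5) by (simp add: a_def b_def toM_tr)
  have eq: "tr2 (a*b) = tr2 (b*b)" using assms(6) by (simp add: a_def b_def toM_tr toM_mult)
  note M = main_m2[OF ga gb gW P_def lt eq]
  have e: "trw A B (u @ v @ concat (replicate s [La, Lb, Lb]) @ x) = tr2 (pw a b u * (pw a b v * (P * pw a b x)))" for u v x
    by (simp add: trw_pw pw_app pw_rep P_def a_def b_def)
  show ?thesis
  proof
    show "trw A B (w @ [La, Lb] @ concat (replicate s [La, Lb, Lb]) @ [La, Lb, Lb, Lb])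
           < trw A B (w @ [La, Lb, Lb] @ concat (replicate s [La, Lb, Lb]) @ [La, Lb, Lb])"
      using M(1) e[of w "[La, Lb]" "[La, Lb, Lb, Lb]"] e[of w "[La, Lb, Lb]" "[La, Lb, Lb]"]
      by (simp add: W_def mult.assoc)
    show "(w = [] \<or> hd w = La) \<longrightarrow>
           trw A B (w @ [La, Lb, Lb, Lb] @ concat (replicate s [La, Lb, Lb]) @ [La, Lb])
           < trw A B (w @ [La, Lb, Lb] @ concat (replicate s [La, Lb, Lb]) @ [La, Lb, Lb])"
    proof
      assume h: "w = [] \<or> hd w = La"
      have "W = 1 \<or> (\<exists>W'. good W' \<and> W = a * W')"
      proof (cases w)
        case Nil then show ?thesis by (simp add: W_def)
      next
        case (Cons l w')
        then have "l = La" using h by simp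
        then show ?thesis using Cons pw_good[OF ga gb, of w'] by (auto simp: W_def)
      qed
      from M(2)[OF this] show "trw A B (w @ [La, Lb, Lb, Lb] @ concat (replicate s [La, Lb, Lb]) @ [La, Lb])
           < trw A B (w @ [La, Lb, Lb] @ concat (replicate s [La, Lb, Lb]) @ [La, Lb, Lb])"
        using e[of w "[La, Lb, Lb, Lb]" "[La, Lb]"] e[of w "[La, Lb, Lb]" "[La, Lb, Lb]"]
        by (simp add: W_def mult.assoc)
    qed
  qed
qed
end
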